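(* Let $1<a_1<a_2$ be coprime integers and $S=\langle a_1,a_2\rangle$. For all $t\in(1,\infty)$, $\Delta_t(S)$ is dense in $[|a_1a_2P(t)|,a_2]$, i.e. $[|a_1a_2P(t)|,a_2]$ is contained in the closure of $\Delta_t(S)$.
   Context: $S=\{\lambda_1a_1+\lambda_2a_2:\lambda_1,\lambda_2\in\mathbb{N}_0\}$. For $t\in[1,\infty)$ and $(u,v)\in\mathbb{R}^2$, $\|(u,v)\|_t=(|u|^t+|v|^t)^{1/t}$. For $x\in S$, $Z(x)=\{(m,n)\in\mathbb{N}_0^2: ma_1+na_2=x\}$, $\mathscr{L}_t(x)=\{\|f\|_t: f\in Z(x)\}$, $\Delta_t(x)$ is the set of differences between consecutive elements of $\mathscr{L}_t(x)$ (in increasing order), and $\Delta_t(S)=\bigcup_{x\in S}\Delta_t(x)$. Define $\mu_t(r)=\left\|\left(\frac{1-r}{a_1},\frac{r}{a_2}\right)\right\|_t$ for $r\in[0,1]$, $r_0(t)=\min\{r\in[0,1]:\mu_t(r)=\frac{1}{a_2}\}$, and $P(t)=\mu_t'(r_0(t))$ (derivative in $r$). *)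

theory Defs
  imports "HOL-Analysis.Analysis"
begin

definition numsg :: "nat \<Rightarrow> nat \<Rightarrow> nat set" where
  "numsg a1 a2 = {l1 * a1 + l2 * a2 | l1 l2. True}"

definition tnorm :: "real \<Rightarrow> real \<times> real \<Rightarrow> real" where
  "tnorm t uv = (\<bar>fst uv\<bar> powr t + \<bar>snd uv\<bar> powr t) powr (1 / t)"

definition factorizations :: "nat \<Rightarrow> nat \<Rightarrow> nat \<Rightarrow> (nat \<times> nat) set" where
  "factorizations a1 a2 x = {(m, n). m * a1 + n * a2 = x}"

definition tlengths :: "real \<Rightarrow> nat \<Rightarrow> nat \<Rightarrow> nat \<Rightarrow> real set" where
  "tlengths t a1 a2 x = (\<lambda>(m, n). tnorm t (real m, real n)) ` factorizations a1 a2 x"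

definition consec_diffs :: "real set \<Rightarrow> real set" where
  "consec_diffs L = {b - a | a b. a \<in> L \<and> b \<in> L \<and> a < b \<and> \<not> (\<exists>c\<in>L. a < c \<and> c < b)}"

definition tdelta :: "real \<Rightarrow> nat \<Rightarrow> nat \<Rightarrow> nat \<Rightarrow> real set" where
  "tdelta t a1 a2 x = consec_diffs (tlengths t a1 a2 x)"

definition tdelta_S :: "real \<Rightarrow> nat \<Rightarrow> nat \<Rightarrow> real set" where
  "tdelta_S t a1 a2 = (\<Union>x\<in>numsg a1 a2. tdelta t a1 a2 x)"

definition mu :: "real \<Rightarrow> nat \<Rightarrow> nat \<Rightarrow> real \<Rightarrow> real" where
  "mu t a1 a2 r = tnorm t ((1 - r) / real a1, r / real a2)"

definition r0 :: "real \<Rightarrow> nat \<Rightarrow> nat \<Rightarrow> real" where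
  "r0 t a1 a2 = (LEAST r. r \<in> {0..1} \<and> mu t a1 a2 r = 1 / real a2)"

definition Pt :: "real \<Rightarrow> nat \<Rightarrow> nat \<Rightarrow> real" where
  "Pt t a1 a2 = deriv (mu t a1 a2) (r0 t a1 a2)"

end

theory Submission
  imports Defs
begin

lemma powr_le_self01:
  fixes l t :: real
  assumes "1 \<le> t" "0 \<le> l" "l \<le> 1"
  shows "l powr t \<le> l"
proof (cases "l = 0")
  case True then show ?thesis by simp
next
  case False
  then have "l powr t \<le> l powr 1" using assms by (intro powr_mono') auto
  then show ?thesis using False assms by simp
qed

lemma pow_conv:
  fixes t x y l :: real
  assumes t: "1 \<le> t" and xy: "0 \<le> x" "0 \<le> y" and l: "0 \<le> l" "l \<le> 1"
  shows "((1-l)*x + l*y) powr t \<le> (1-l) * x powr t + l * y powr t"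
proof -
  consider "x = 0" | "y = 0" | "x > 0" "y > 0" using xy by linarith
  then show ?thesis
  proof cases
    case 1
    have "(l*y) powr t = l powr t * y powr t" using l xy by (simp add: powr_mult)
    also have "\<dots> \<le> l * y powr t" using powr_le_self01[OF t l] by (simp add: mult_right_mono)
    finally show ?thesis using 1 by simp
  next
    case 2
    have "((1-l)*x) powr t = (1-l) powr t * x powr t" using l xy by (simp add: powr_mult)
    also have "\<dots> \<le> (1-l) * x powr t" using powr_le_self01[OF t, of "1-l"] l by (simp add: mult_right_mono)
    finally show ?thesis using 2 by simp
  next
    case 3
    have "convex_on {0<..} (\<lambda>x::real. x powr t)" by (rule powr_convex[OF t])
    from convex_onD[OF this l, of x y] 3 show ?thesis by simp
  qed
qed

lemma H_convex:
  fixes t a b :: real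
  assumes t: "1 \<le> t" and ab: "0 < a" "0 < b"
  shows "convex_on {0..1} (\<lambda>r. ((1-r)/a) powr t + (r/b) powr t)"
proof (rule convex_on_add)
  show "convex_on {0..1} (\<lambda>r. ((1-r)/a) powr t)"
  proof (rule convex_onI)
    fix l x y :: real assume "0 < l" "l < 1" "x \<in> {0..1}" "y \<in> {0..1}"
    then have "((1-l)*((1-x)/a) + l*((1-y)/a)) powr t \<le> (1-l) * ((1-x)/a) powr t + l * ((1-y)/a) powr t"
      using ab by (intro pow_conv[OF t]) auto
    moreover have "(1-l)*((1-x)/a) + l*((1-y)/a) = (1 - ((1-l)*\<^sub>R x + l *\<^sub>R y))/a"
      using ab by (simp add: field_simps)
    ultimately show "((1 - ((1-l)*\<^sub>R x + l *\<^sub>R y))/a) powr t \<le> (1-l) * ((1-x)/a) powr t + l * ((1-y)/a) powr t"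
      by simp
  qed (rule convex_real_interval)
  show "convex_on {0..1} (\<lambda>r. (r/b) powr t)"
  proof (rule convex_onI)
    fix l x y :: real assume "0 < l" "l < 1" "x \<in> {0..1}" "y \<in> {0..1}"
    then have "((1-l)*(x/b) + l*(y/b)) powr t \<le> (1-l) * (x/b) powr t + l * (y/b) powr t"
      using ab by (intro pow_conv[OF t]) auto
    moreover have "(1-l)*(x/b) + l*(y/b) = ((1-l)*\<^sub>R x + l *\<^sub>R y)/b"
      using ab by (simp add: field_simps)
    ultimately show "(((1-l)*\<^sub>R x + l *\<^sub>R y)/b) powr t \<le> (1-l) * (x/b) powr t + l * (y/b) powr t"
      by simp
  qed (rule convex_real_interval)
qed

definition HH :: "real \<Rightarrow> real \<Rightarrow> real \<Rightarrow> real \<Rightarrow> real" where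
  "HH t a b r = ((1-r)/a) powr t + (r/b) powr t"

definition GG :: "real \<Rightarrow> real \<Rightarrow> real \<Rightarrow> real \<Rightarrow> real" where
  "GG t a b r = HH t a b r powr (1/t - 1) * ((r/b) powr (t-1) / b - ((1-r)/a) powr (t-1) / a)"

lemma HH_pos: "0 < a \<Longrightarrow> 0 < b \<Longrightarrow> r \<in> {0..1} \<Longrightarrow> 0 < HH t a b r"
  unfolding HH_def
  by (cases "r = 1") (auto intro: add_pos_nonneg add_nonneg_pos)

lemma HH_cont: "0 < a \<Longrightarrow> 0 < b \<Longrightarrow> 0 < t \<Longrightarrow> continuous_on {0..1} (HH t a b)"
  unfolding HH_def
  by (intro continuous_intros continuous_on_powr') auto

lemma GG_cont: assumes "0 < a" "0 < b" "1 < t" shows "continuous_on {0..1} (GG t a b)"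
proof -
  have c0: "continuous_on {0..1} (\<lambda>r. HH t a b r powr (1/t - 1))"
    apply (rule continuous_on_powr')
    subgoal using HH_cont[of a b t] assms by simp
    subgoal by (intro continuous_intros)
    subgoal using assms HH_pos[of a b _ t] by (metis less_imp_le less_irrefl)
    done
  have c1: "continuous_on {0..1} (\<lambda>r. (r/b) powr (t-1))"
    apply (rule continuous_on_powr') using assms by (auto intro!: continuous_intros)
  have c2: "continuous_on {0..1} (\<lambda>r. ((1-r)/a) powr (t-1))"
    apply (rule continuous_on_powr') using assms by (auto intro!: continuous_intros)
  show ?thesis unfolding GG_def
    using assms by (intro continuous_on_mult c0 continuous_on_diff continuous_on_divide c1 c2 continuous_on_const) auto
qed

lemma HH_deriv:
  assumes "0 < a" "0 < b" "1 < t" "r \<in> {0<..<1}"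
  shows "((\<lambda>r. HH t a b r powr (1/t)) has_real_derivative GG t a b r) (at r)"
proof -
  have hp: "0 < HH t a b r" using HH_pos[of a b r t] assms by auto
  have p1: "0 < (1-r)/a" "0 < r/b" using assms by auto
  have d1: "((\<lambda>r. (1-r)/a) has_real_derivative (-1/a)) (at r)"
    using assms by (auto intro!: derivative_eq_intros simp: field_simps)
  have d2: "((\<lambda>r. r/b) has_real_derivative (1/b)) (at r)"
    using assms by (auto intro!: derivative_eq_intros simp: field_simps)
  have e1: "((\<lambda>r. ((1-r)/a) powr t) has_real_derivative (t * ((1-r)/a) powr (t-1)) * (-1/a)) (at r)"
    using DERIV_chain2[OF has_real_derivative_powr[OF p1(1)] d1] .
  have e2: "((\<lambda>r. (r/b) powr t) has_real_derivative (t * (r/b) powr (t-1)) * (1/b)) (at r)"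
    using DERIV_chain2[OF has_real_derivative_powr[OF p1(2)] d2] .
  have dH: "(HH t a b has_real_derivative (t * ((1-r)/a) powr (t-1)) * (-1/a) + (t * (r/b) powr (t-1)) * (1/b)) (at r)"
    unfolding HH_def[abs_def] using DERIV_add[OF e1 e2] by simp
  have "((\<lambda>r. HH t a b r powr (1/t)) has_real_derivative
     ((1/t) * HH t a b r powr (1/t - 1)) * ((t * ((1-r)/a) powr (t-1)) * (-1/a) + (t * (r/b) powr (t-1)) * (1/b))) (at r)"
    using DERIV_chain2[OF has_real_derivative_powr[OF hp] dH] .
  moreover have "((1/t) * HH t a b r powr (1/t - 1)) * ((t * ((1-r)/a) powr (t-1)) * (-1/a) + (t * (r/b) powr (t-1)) * (1/b))
     = GG t a b r"
    unfolding GG_def using assms by (simp add: field_simps)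
  ultimately show ?thesis by simp
qed

lemma tnorm_scale:
  fixes k p q t :: real
  assumes "0 \<le> k" "0 < t"
  shows "tnorm t (k*p, k*q) = k * tnorm t (p, q)"
proof (cases "k = 0")
  case True then show ?thesis using assms by (simp add: tnorm_def)
next
  case False
  then have k: "0 < k" using assms by simp
  have "\<bar>k*p\<bar> powr t + \<bar>k*q\<bar> powr t = k powr t * (\<bar>p\<bar> powr t + \<bar>q\<bar> powr t)"
    using k by (simp add: abs_mult powr_mult distrib_left)
  then have "tnorm t (k*p, k*q) = (k powr t) powr (1/t) * (\<bar>p\<bar> powr t + \<bar>q\<bar> powr t) powr (1/t)"
    unfolding tnorm_def using k by (simp add: powr_mult)
  also have "(k powr t) powr (1/t) = k" using k assms by (simp add: powr_powr)
  finally show ?thesis by (simp add: tnorm_def)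
qed

lemma fact_char:
  fixes a1 a2 m n N :: nat
  assumes "coprime a1 a2" "0 < a1" "0 < a2" "m*a1 + n*a2 = a1*a2*N"
  shows "\<exists>i\<le>N. m = a2*(N-i) \<and> n = a1*i"
proof -
  have "a1 dvd n*a2"
    by (metis assms(4) dvd_add_right_iff dvd_triv_left dvd_triv_right mult.assoc)
  then have "a1 dvd n" using assms(1) by (simp add: coprime_dvd_mult_left_iff)
  then obtain i where i: "n = a1*i" by blast
  then have "a1 * (m + a2*i) = a1 * (a2*N)" using assms(4) by (simp add: algebra_simps)
  then have e: "m + a2*i = a2*N" using assms(2) by simp
  then have "a2*i \<le> a2*N" by linarith
  then have "i \<le> N" using assms(3) by simp
  moreover have "m = a2*(N-i)" using e by (simp add: diff_mult_distrib2)
  ultimately show ?thesis using i by blast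
qed

lemma mu_HH:
  assumes "0 < a1" "0 < a2" "r \<in> {0..1}"
  shows "mu t a1 a2 r = HH t (real a1) (real a2) r powr (1/t)"
  using assms unfolding mu_def tnorm_def HH_def by simp

lemma length_i:
  fixes a1 a2 N i :: nat
  assumes "i \<le> N" "0 < N" "0 < a1" "0 < a2" "0 < t"
  shows "tnorm t (real (a2*(N-i)), real (a1*i)) = real a1 * real a2 * real N * mu t a1 a2 (real i / real N)"
proof -
  let ?k = "real a1 * real a2 * real N"
  have e1: "real (a2*(N-i)) = ?k * ((1 - real i / real N) / real a1)"
    using assms by (simp add: of_nat_diff field_simps)
  have e2: "real (a1*i) = ?k * ((real i / real N) / real a2)"
    using assms by (simp add: field_simps)
  have "tnorm t (real (a2*(N-i)), real (a1*i)) = tnorm t (?k * ((1 - real i / real N) / real a1), ?k * ((real i / real N) / real a2))"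
    by (simp only: e1 e2)
  also have "\<dots> = ?k * mu t a1 a2 (real i / real N)"
    unfolding mu_def by (rule tnorm_scale) (use assms in auto)
  finally show ?thesis .
qed

lemma consec_in:
  fixes a1 a2 N j :: nat
  assumes cop: "coprime a1 a2" and pos: "0 < a1" "0 < a2" "0 < t" "0 < N" and jN: "j < N"
  and lo: "\<And>i. i \<le> N \<Longrightarrow> i \<le> j \<Longrightarrow> mu t a1 a2 (real j / real N) \<le> mu t a1 a2 (real i / real N)"
  and hi: "\<And>i. i \<le> N \<Longrightarrow> j+1 \<le> i \<Longrightarrow> mu t a1 a2 (real i / real N) \<le> mu t a1 a2 (real (j+1) / real N)"
  and lt: "mu t a1 a2 (real (j+1) / real N) < mu t a1 a2 (real j / real N)"
  shows "real a1 * real a2 * real N * (mu t a1 a2 (real j / real N) - mu t a1 a2 (real (j+1) / real N)) \<in> tdelta_S t a1 a2"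
proof -
  let ?k = "real a1 * real a2 * real N"
  let ?x = "a1*a2*N"
  have kpos: "0 < ?k" using pos by simp
  have xS: "?x \<in> numsg a1 a2" unfolding numsg_def
    by (rule CollectI, rule exI[of _ "a2*N"], rule exI[of _ 0]) (simp add: algebra_simps)
  let ?L = "tlengths t a1 a2 ?x"
  have memL: "?k * mu t a1 a2 (real i / real N) \<in> ?L" if "i \<le> N" for i
  proof -
    have "(a2*(N-i), a1*i) \<in> factorizations a1 a2 ?x"
      unfolding factorizations_def using that
      by (simp add: algebra_simps diff_mult_distrib2 diff_mult_distrib)
    then show ?thesis unfolding tlengths_def
      using length_i[OF that pos(4) pos(1) pos(2) pos(3)] by (metis (no_types, lifting) case_prod_conv image_eqI)
  qed
  have formL: "\<exists>i\<le>N. c = ?k * mu t a1 a2 (real i / real N)" if "c \<in> ?L" for c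
  proof -
    from that obtain m n where mn: "(m,n) \<in> factorizations a1 a2 ?x" "c = tnorm t (real m, real n)"
      unfolding tlengths_def by auto
    then obtain i where i: "i \<le> N" "m = a2*(N-i)" "n = a1*i"
      using fact_char[OF cop pos(1) pos(2), of m n N] unfolding factorizations_def by auto
    then show ?thesis using mn(2) length_i[OF i(1) pos(4) pos(1) pos(2) pos(3)] by auto
  qed
  let ?A = "?k * mu t a1 a2 (real j / real N)"
  let ?B = "?k * mu t a1 a2 (real (j+1) / real N)"
  have AL: "?A \<in> ?L" using memL jN by simp
  have BL: "?B \<in> ?L" using memL[of "j+1"] jN by simp
  have BA: "?B < ?A" using mult_strict_left_mono[OF lt kpos] .
  have nob: "\<not> (\<exists>c\<in>?L. ?B < c \<and> c < ?A)"
  proof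
    assume "\<exists>c\<in>?L. ?B < c \<and> c < ?A"
    then obtain c where c: "c \<in> ?L" "?B < c" "c < ?A" by blast
    then obtain i where i: "i \<le> N" "c = ?k * mu t a1 a2 (real i / real N)" using formL by blast
    show False
    proof (cases "i \<le> j")
      case True
      then have "?A \<le> c" using mult_left_mono[OF lo[OF i(1) True], of ?k] kpos i(2) by simp
      then show False using c by simp
    next
      case False
      then have "c \<le> ?B" using mult_left_mono[OF hi[OF i(1)], of ?k] kpos i(2) False by simp
      then show False using c by simp
    qed
  qed
  have D: "?A - ?B \<in> tdelta t a1 a2 ?x"
    unfolding tdelta_def consec_diffs_def using AL BL BA nob by blast
  have E: "?A - ?B = real a1 * real a2 * real N * (mu t a1 a2 (real j / real N) - mu t a1 a2 (real (j+1) / real N))"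
    by (simp only: right_diff_distrib)
  from D have "real a1 * real a2 * real N * (mu t a1 a2 (real j / real N) - mu t a1 a2 (real (j+1) / real N)) \<in> tdelta t a1 a2 ?x"
    by (simp only: E)
  then show ?thesis unfolding tdelta_S_def using xS by blast
qed

lemma powr_inv_le_iff:
  fixes x y e :: real
  assumes "0 < e" "0 \<le> x" "0 \<le> y"
  shows "x powr e \<le> y powr e \<longleftrightarrow> x \<le> y"
  using assms by (meson not_le powr_less_mono2 powr_mono2 less_imp_le)

theorem proposition2:
  fixes a1 a2 :: nat and t :: real
  assumes "1 < a1" and "a1 < a2" and "coprime a1 a2" and "1 < t"
  shows "{\<bar>real a1 * real a2 * Pt t a1 a2\<bar> .. real a2} \<subseteq> closure (tdelta_S t a1 a2)"
proof -
  define b1 where "b1 = real a1"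
  define b2 where "b2 = real a2"
  have b: "1 < b1" "b1 < b2" "0 < b1" "0 < b2" using assms unfolding b1_def b2_def by auto
  have a0: "0 < a1" "0 < a2" using assms by auto
  have t0: "0 < t" "1 \<le> t" using assms by auto
  define g where "g = mu t a1 a2"
  define H where "H = HH t b1 b2"
  define G where "G = GG t b1 b2"
  have gH: "g r = H r powr (1/t)" if "r \<in> {0..1}" for r
    unfolding g_def H_def b1_def b2_def using mu_HH[OF a0 that] .
  have Hpos: "0 < H r" if "r \<in> {0..1}" for r
    unfolding H_def using HH_pos[OF b(3,4) that] .
  have Hcont: "continuous_on {0..1} H" unfolding H_def using HH_cont[OF b(3,4) t0(1)] .
  have gcont: "continuous_on {0..1} g"
  proof -
    have "continuous_on {0..1} (\<lambda>r. H r powr (1/t))"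
    proof (rule continuous_on_powr'[OF Hcont continuous_on_const], rule ballI)
      fix x :: real assume "x \<in> {0..1}"
      then have "0 < H x" by (rule Hpos)
      then show "0 \<le> H x \<and> (H x = 0 \<longrightarrow> 0 < 1/t)" by simp
    qed
    then show ?thesis by (rule continuous_on_eq) (simp add: gH)
  qed
  have Gcont: "continuous_on {0..1} G" unfolding G_def using GG_cont[OF b(3,4) assms(4)] .
  have gder: "(g has_real_derivative G r) (at r)" if "r \<in> {0<..<1}" for r
  proof (rule has_field_derivative_transform_within_open[of "\<lambda>r. H r powr (1/t)" _ _ "{0<..<1}"])
    show "((\<lambda>r. H r powr (1 / t)) has_real_derivative G r) (at r)"
      unfolding H_def G_def using HH_deriv[OF b(3,4) assms(4) that] .
    show "open {0<..<(1::real)}" by simp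
    show "r \<in> {0<..<1}" by (rule that)
    show "H x powr (1/t) = g x" if "x \<in> {0<..<1}" for x
      using gH[of x] that by simp
  qed
  have Hconv: "convex_on {0..1} H" unfolding H_def HH_def[abs_def] using H_convex[OF t0(2) b(3,4)] .
  have gmono: "g u \<le> g v \<longleftrightarrow> H u \<le> H v" if "u \<in> {0..1}" "v \<in> {0..1}" for u v
    unfolding gH[OF that(1)] gH[OF that(2)]
    by (rule powr_inv_le_iff) (use t0 Hpos[OF that(1)] Hpos[OF that(2)] in auto)
  have g0: "g 0 = 1/b1"
  proof -
    have "H 0 = (1/b1) powr t" unfolding H_def HH_def using t0 by simp
    then have "g 0 = ((1/b1) powr t) powr (1/t)" using gH[of 0] by simp
    also have "\<dots> = (1/b1) powr (t * (1/t))" by (simp only: powr_powr)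
    also have "t * (1/t) = 1" using t0 by simp
    finally show ?thesis using b by simp
  qed
  have g1: "g 1 = 1/b2"
  proof -
    have "H 1 = (1/b2) powr t" unfolding H_def HH_def using t0 by simp
    then have "g 1 = ((1/b2) powr t) powr (1/t)" using gH[of 1] by simp
    also have "\<dots> = (1/b2) powr (t * (1/t))" by (simp only: powr_powr)
    also have "t * (1/t) = 1" using t0 by simp
    finally show ?thesis using b by simp
  qed
  have G0: "G 0 = -1/b1"
  proof -
    have "G 0 = ((1/b1) powr t) powr (1/t - 1) * (- ((1/b1) powr (t-1) / b1))"
      unfolding G_def GG_def HH_def using t0 by simp
    also have "((1/b1) powr t) powr (1/t - 1) = (1/b1) powr (1 - t)"
    proof -
      have "t * (1/t - 1) = 1 - t" using t0 by (simp add: field_simps)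
      then show ?thesis by (simp only: powr_powr)
    qed
    also have "(1/b1) powr (1 - t) * (- ((1/b1) powr (t-1) / b1)) = - ((1/b1) powr ((1 - t) + (t - 1)) / b1)"
      by (simp only: powr_add) simp
    finally show ?thesis using b by simp
  qed
  have G1: "G 1 = 1/b2"
  proof -
    have "G 1 = ((1/b2) powr t) powr (1/t - 1) * ((1/b2) powr (t-1) / b2)"
      unfolding G_def GG_def HH_def using t0 by simp
    also have "((1/b2) powr t) powr (1/t - 1) = (1/b2) powr (1 - t)"
    proof -
      have "t * (1/t - 1) = 1 - t" using t0 by (simp add: field_simps)
      then show ?thesis by (simp only: powr_powr)
    qed
    also have "(1/b2) powr (1 - t) * ((1/b2) powr (t-1) / b2) = (1/b2) powr ((1 - t) + (t - 1)) / b2"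
      by (simp only: powr_add) simp
    finally show ?thesis by simp
  qed
  define Z where "Z = {r \<in> {0..1}. g r = 1/b2}"
  have "closed Z" unfolding Z_def by (rule continuous_closed_preimage_constant[OF gcont closed_atLeastAtMost])
  moreover have "bounded Z" unfolding Z_def by (rule bounded_subset[OF bounded_closed_interval]) auto
  ultimately have "compact Z" by (simp add: compact_eq_bounded_closed)
  moreover have "1 \<in> Z" unfolding Z_def using g1 by simp
  ultimately obtain z0 where z0: "z0 \<in> Z" "\<And>z. z \<in> Z \<Longrightarrow> z0 \<le> z"
    using compact_attains_inf[of Z] by blast
  define \<rho> where "\<rho> = r0 t a1 a2"
  have rho_eq: "\<rho> = z0"
    unfolding \<rho>_def r0_def
  proof (rule Least_equality)
    show "z0 \<in> {0..1} \<and> mu t a1 a2 z0 = 1 / real a2" using z0(1) unfolding Z_def g_def b2_def by simp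
    show "\<And>y. y \<in> {0..1} \<and> mu t a1 a2 y = 1 / real a2 \<Longrightarrow> z0 \<le> y"
      using z0(2) unfolding Z_def g_def b2_def by simp
  qed
  have rho01: "\<rho> \<in> {0..1}" and grho: "g \<rho> = 1/b2" using z0(1) rho_eq unfolding Z_def by auto
  have above: "1/b2 < g u" if "u \<in> {0..1}" "u < \<rho>" for u
  proof (rule ccontr)
    have u0: "0 \<le> u" using that(1) by simp
    assume "\<not> 1/b2 < g u"
    then have "g u \<le> 1/b2" by simp
    moreover have "1/b2 \<le> g 0" using g0 b by (simp add: frac_le)
    moreover have "continuous_on {0..u} g" by (rule continuous_on_subset[OF gcont]) (use that(1) in auto)
    ultimately obtain x where "0 \<le> x" "x \<le> u" "g x = 1/b2"
      using IVT2'[of g u "1/b2" 0] u0 by auto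
    then have "x \<in> Z" using that(1) unfolding Z_def by auto
    then have "\<rho> \<le> x" using z0(2) rho_eq by simp
    then show False using \<open>x \<le> u\<close> that(2) by simp
  qed
  have rho_pos: "0 < \<rho>"
  proof -
    have "\<rho> \<noteq> 0" using grho g0 b by auto
    then show ?thesis using rho01 by simp
  qed
  have rho_lt1: "\<rho> < 1"
  proof -
    obtain d where d: "d > 0" "\<And>x. x \<in> {0..1} \<Longrightarrow> dist x 1 < d \<Longrightarrow> dist (G x) (G 1) < 1/b2"
      using Gcont b unfolding continuous_on_iff by (metis atLeastAtMost_iff divide_pos_pos le_numeral_extra(1) le_numeral_extra(4) zero_less_one)
    define r where "r = max (1/2) (1 - d/2)"
    have r: "0 < r" "r < 1" "1 - r < d" using d unfolding r_def by auto
    have "continuous_on {r..1} g" by (rule continuous_on_subset[OF gcont]) (use r in auto)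
    moreover have "g differentiable (at x)" if "r < x" "x < 1" for x
      using gder[of x] that r by (auto simp: real_differentiable_def)
    ultimately obtain l z where lz: "r < z" "z < 1" "DERIV g z :> l" "g 1 - g r = (1 - r) * l"
      using MVT[OF r(2), of g] by blast
    have "l = G z" using DERIV_unique[OF lz(3) gder[of z]] lz r by auto
    moreover have "dist (G z) (G 1) < 1/b2" using d(2)[of z] lz r by (auto simp: dist_real_def)
    ultimately have "0 < l" using G1 by (auto simp: dist_real_def)
    then have "g r < 1/b2" using lz(4) r g1 by (smt (verit) mult_pos_pos)
    moreover have "1/b2 \<le> g 0" using g0 b by (simp add: frac_le)
    moreover have "continuous_on {0..r} g" by (rule continuous_on_subset[OF gcont]) (use r in auto)
    ultimately obtain x where "0 \<le> x" "x \<le> r" "g x = 1/b2"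
      using IVT2'[of g r "1/b2" 0] r by auto
    then have "x \<in> Z" using r unfolding Z_def by auto
    then have "\<rho> \<le> x" using z0(2) rho_eq by simp
    then show ?thesis using \<open>x \<le> r\<close> r by simp
  qed
  have Pval: "Pt t a1 a2 = G \<rho>"
    unfolding Pt_def \<rho>_def[symmetric] g_def[symmetric]
    using DERIV_imp_deriv[OF gder[of \<rho>]] rho_pos rho_lt1 by simp
  have dom: "g r \<le> g u" if "0 \<le> u" "u \<le> r" "r \<le> 1" "u < \<rho>" for u r
  proof -
    have "convex_on {u..1} H" using Hconv by (rule convex_on_subset) (use that in auto)
    then have "H r \<le> max (H u) (H 1)" by (rule convex_on_le_max) (use that in auto)
    moreover have "H 1 < H u"
    proof -
      have "g 1 < g u" using above[of u] that g1 by auto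
      then show ?thesis using gmono[of u 1] that by auto
    qed
    ultimately have "H r \<le> H u" by simp
    then show ?thesis using gmono[of r u] that by auto
  qed
  define c where "c = b1 * b2"
  have c0: "0 < c" unfolding c_def using b by simp
  define Y where "Y = closure (tdelta_S t a1 a2)"
  have key: "- (c * G s) \<in> Y" if s: "0 < s" "s < \<rho>" "G s < 0" for s
    unfolding Y_def closure_approachable
  proof (intro allI impI)
    fix e :: real assume e: "0 < e"
    define ep where "ep = min (e/c) (- G s / 2)"
    have ep: "0 < ep" "ep \<le> e/c" "ep \<le> - G s / 2" unfolding ep_def using e c0 s by auto
    have s01: "s \<in> {0..1}" using s rho01 by auto
    obtain d where d: "d > 0" "\<And>x. x \<in> {0..1} \<Longrightarrow> dist x s < d \<Longrightarrow> dist (G x) (G s) < ep"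
      using Gcont s01 ep(1) unfolding continuous_on_iff by metis
    obtain N :: nat where N: "max (max (1/d) (2/s)) (1/(\<rho> - s)) < real N"
      using reals_Archimedean2 by blast
    have Npos: "0 < real N" using N d s by (smt (verit) divide_pos_pos)
    have N1: "1 / real N < d" using N Npos d by (simp add: field_simps)
    have N2: "2 < s * real N" using N Npos s by (simp add: field_simps)
    have N3: "1 / real N < \<rho> - s" using N Npos s by (simp add: field_simps)
    define j where "j = nat \<lfloor>s * real N\<rfloor>"
    have j1: "real j \<le> s * real N" "s * real N < real j + 1"
      unfolding j_def using s Npos by (auto simp: of_nat_nat)
    define u where "u = real j / real N"
    define v where "v = real (j+1) / real N"
    have us: "u \<le> s" unfolding u_def using j1 Npos by (simp add: field_simps)
    have sv: "s < v" unfolding v_def using j1 Npos by (simp add: field_simps)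
    have vu: "v - u = 1 / real N" unfolding u_def v_def using Npos by (simp add: field_simps)
    have u0: "0 < u" unfolding u_def using j1 N2 Npos by (smt (verit) divide_pos_pos of_nat_0_less_iff of_nat_less_0_iff)
    have vrho: "v < \<rho>" using us vu N3 by simp
    have jN: "j < N"
    proof -
      have "v < 1" using vrho rho_lt1 by simp
      then have "real (j+1) < real N" unfolding v_def using Npos by (simp add: field_simps)
      then show ?thesis by simp
    qed
    have "continuous_on {u..v} g" by (rule continuous_on_subset[OF gcont]) (use u0 vrho rho_lt1 in auto)
    moreover have "g differentiable (at x)" if "u < x" "x < v" for x
      using gder[of x] that u0 vrho rho_lt1 by (auto simp: real_differentiable_def)
    moreover have "u < v" using us sv by simp
    ultimately obtain l z where lz: "u < z" "z < v" "DERIV g z :> l" "g v - g u = (v - u) * l"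
      using MVT[of u v g] by blast
    have lG: "l = G z" using DERIV_unique[OF lz(3) gder[of z]] lz u0 vrho rho_lt1 by auto
    have "dist z s < d" using lz us sv vu N1 by (auto simp: dist_real_def)
    then have dG: "dist (G z) (G s) < ep" using d(2)[of z] lz u0 vrho rho_lt1 by auto
    then have Gz: "G z < 0" using ep by (auto simp: dist_real_def)
    have guv: "g v < g u" using lz(4) lG Gz vu Npos by (smt (verit) divide_pos_pos mult_pos_neg)
    have mem: "real a1 * real a2 * real N * (mu t a1 a2 (real j / real N) - mu t a1 a2 (real (j+1) / real N)) \<in> tdelta_S t a1 a2"
    proof (rule consec_in[OF assms(3) a0 t0(1) _ jN])
      show "0 < N" using Npos by simp
      show "mu t a1 a2 (real j / real N) \<le> mu t a1 a2 (real i / real N)" if "i \<le> N" "i \<le> j" for i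
      proof -
        have iu: "real i / real N \<le> u" unfolding u_def using that Npos by (simp add: divide_right_mono)
        moreover have "0 \<le> real i / real N" by simp
        moreover have "u \<le> 1" using us s rho_lt1 by simp
        moreover have "real i / real N < \<rho>" using iu us s by simp
        ultimately show ?thesis using dom[of "real i / real N" u] unfolding g_def u_def by simp
      qed
      show "mu t a1 a2 (real i / real N) \<le> mu t a1 a2 (real (j+1) / real N)" if "i \<le> N" "j+1 \<le> i" for i
      proof -
        have "v \<le> real i / real N" unfolding v_def using that Npos by (simp add: divide_right_mono)
        moreover have "real i / real N \<le> 1" using that Npos by simp
        moreover have "0 \<le> v" using u0 us sv by simp
        ultimately show ?thesis using dom[of v "real i / real N"] vrho unfolding g_def v_def by simp
      qed
      show "mu t a1 a2 (real (j+1) / real N) < mu t a1 a2 (real j / real N)"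
        using guv unfolding g_def u_def v_def .
    qed
    have val: "real a1 * real a2 * real N * (mu t a1 a2 (real j / real N) - mu t a1 a2 (real (j+1) / real N)) = - (c * G z)"
    proof -
      have "real a1 * real a2 * real N * (mu t a1 a2 (real j / real N) - mu t a1 a2 (real (j+1) / real N))
          = c * real N * (g u - g v)" unfolding c_def b1_def b2_def g_def u_def v_def by simp
      also have "\<dots> = - (c * G z)" using lz(4) lG vu Npos by (simp add: field_simps)
      finally show ?thesis .
    qed
    have "dist (- (c * G z)) (- (c * G s)) < e"
    proof -
      have "dist (- (c * G z)) (- (c * G s)) = c * dist (G z) (G s)"
        using c0 by (simp add: dist_real_def abs_mult right_diff_distrib[symmetric] abs_minus_commute)
      also have "\<dots> < c * (e / c)" using dG ep c0 by (intro mult_strict_left_mono) auto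
      finally show ?thesis using c0 by simp
    qed
    then show "\<exists>y\<in>tdelta_S t a1 a2. dist y (- (c * G s)) < e" using mem val by metis
  qed
  have Yc: "closed Y" unfolding Y_def by simp
  define F where "F s = - (c * G s)" for s
  have F0: "F 0 = b2" unfolding F_def c_def using G0 b by simp
  have Fcont: "continuous_on {0..\<rho>} F" unfolding F_def
    using Gcont rho01 by (intro continuous_intros) (auto intro: continuous_on_subset)
  have mid: "y \<in> Y" if y: "\<bar>c * G \<rho>\<bar> < y" "y < b2" for y
  proof -
    have "F \<rho> \<le> y" using y unfolding F_def by linarith
    moreover have "y \<le> F 0" using F0 y by simp
    ultimately obtain s where s: "0 \<le> s" "s \<le> \<rho>" "F s = y"
      using IVT2'[of F \<rho> y 0] Fcont rho_pos by auto
    have "s \<noteq> 0" using s F0 y by auto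
    moreover have "s \<noteq> \<rho>" using s y unfolding F_def by auto
    moreover have "G s < 0"
    proof -
      have "0 < y" using y(1) by linarith
      then show ?thesis using s(3) c0 mult_nonneg_nonneg[of c "G s"] unfolding F_def by linarith
    qed
    ultimately show ?thesis using key[of s] s unfolding F_def by auto
  qed
  have top: "b2 \<in> Y"
  proof -
    have "b2 \<in> closure Y" unfolding closure_approachable
    proof (intro allI impI)
      fix e :: real assume e: "0 < e"
      define ep where "ep = min (e/c) (1 / (2*b1))"
      have ep: "0 < ep" "ep \<le> e/c" "ep \<le> 1 / (2*b1)" unfolding ep_def using e c0 b by auto
      obtain d where d: "d > 0" "\<And>x. x \<in> {0..1} \<Longrightarrow> dist x 0 < d \<Longrightarrow> dist (G x) (G 0) < ep"
        using Gcont ep(1) unfolding continuous_on_iff by (metis atLeastAtMost_iff order_refl zero_le_one)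
      define s where "s = min (d/2) (\<rho>/2)"
      have s: "0 < s" "s < \<rho>" "s < d" unfolding s_def using d rho_pos by auto
      have dG: "dist (G s) (G 0) < ep" using d(2)[of s] s rho_lt1 by (auto simp: dist_real_def)
      have "G s < 0"
      proof -
        have "1 / (2*b1) < 1/b1" using b by (simp add: frac_less2)
        then show ?thesis using dG ep G0 by (auto simp: dist_real_def)
      qed
      then have inY: "F s \<in> Y" using key s unfolding F_def by auto
      have "dist (F s) b2 = c * dist (G s) (G 0)"
        unfolding F0[symmetric] F_def using c0 by (simp add: dist_real_def abs_mult right_diff_distrib[symmetric] abs_minus_commute)
      also have "\<dots> < c * (e / c)" using dG ep c0 by (intro mult_strict_left_mono) auto
      finally show "\<exists>y\<in>Y. dist y b2 < e" using inY c0 by auto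
    qed
    then show ?thesis using Yc by simp
  qed
  have "{\<bar>c * G \<rho>\<bar> .. b2} \<subseteq> Y"
  proof (cases "\<bar>c * G \<rho>\<bar> < b2")
    case True
    have "{\<bar>c * G \<rho>\<bar> <..< b2} \<subseteq> Y" using mid by auto
    then have "closure {\<bar>c * G \<rho>\<bar> <..< b2} \<subseteq> Y" using Yc by (simp add: closure_minimal)
    then show ?thesis using True by simp
  next
    case False
    then have "{\<bar>c * G \<rho>\<bar> .. b2} \<subseteq> {b2}" by auto
    then show ?thesis using top by auto
  qed
  then show ?thesis unfolding Y_def c_def b1_def b2_def Pval .
qed

end
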